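(* $S\mathbb{R}^{n\times n\times p}_+=(S\mathbb{R}^{n\times n\times p}_+)^*$, where the dual cone is taken in the space $S\mathbb{R}^{n\times n\times p}$ with respect to the inner product $\langle\cdot,\cdot\rangle$, i.e. $(S\mathbb{R}^{n\times n\times p}_+)^*=\{\mathcal{B}\in S\mathbb{R}^{n\times n\times p}:\langle\mathcal{A},\mathcal{B}\rangle\ge0\ \text{for all}\ \mathcal{A}\in S\mathbb{R}^{n\times n\times p}_+\}$.
   Context: For $\mathcal{A}\in\mathbb{R}^{m\times n\times p}$ let $A^{(k)}\in\mathbb{R}^{m\times n}$ ($k\in[p]$) be its frontal slices, $(A^{(k)})_{ij}=a_{ijk}$. $\mathrm{bcirc}(\mathcal{A})\in\mathbb{R}^{mp\times np}$ is the block circulant matrix whose $(i,j)$ block ($i,j\in[p]$) is $A^{(((i-j)\bmod p)+1)}$. $\mathrm{unfold}(\mathcal{A})$ stacks $A^{(1)},\dots,A^{(p)}$ vertically, $\mathrm{fold}$ is its inverse, and the T-product is $\mathcal{A}*\mathcal{B}=\mathrm{fold}(\mathrm{bcirc}(\mathcal{A})\,\mathrm{unfold}(\mathcal{B}))$. The transpose $\mathcal{A}^\top$ has frontal slices $(A^{(1)})^\top,(A^{(p)})^\top,\dots,(A^{(2)})^\top$; $S\mathbb{R}^{n\times n\times p}$ is the set of $\mathcal{A}\in\mathbb{R}^{n\times n\times p}$ with $\mathcal{A}^\top=\mathcal{A}$. The inner product is $\langle\mathcal{A},\mathcal{B}\rangle=\sum a_{ijk}b_{ijk}$. $S\mathbb{R}^{n\times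 n\times p}_+$ is the set of symmetric T-positive semidefinite tensors: $\mathcal{A}\in S\mathbb{R}^{n\times n\times p}$ with $\langle\mathcal{X},\mathcal{A}*\mathcal{X}\rangle\ge0$ for all $\mathcal{X}\in\mathbb{R}^{n\times1\times p}$. *)

theory Defs
  imports Complex_Main
begin

text \<open>Third-order real tensors of size m x n x p are represented as functions
  nat => nat => nat => real with 0-based indices (i < m, j < n, k < p), required
  to vanish outside this index box.
  Frontal slice k (1-based in the paper) is the 0-based slice k-1.\<close>

type_synonym tensor = "nat \<Rightarrow> nat \<Rightarrow> nat \<Rightarrow> real"
type_synonym mat = "nat \<Rightarrow> nat \<Rightarrow> real"

definition tvalid :: "nat \<Rightarrow> nat \<Rightarrow> nat \<Rightarrow> tensor \<Rightarrow> bool" where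
  "tvalid m n p A \<longleftrightarrow> (\<forall>i j k. \<not> (i < m \<and> j < n \<and> k < p) \<longrightarrow> A i j k = 0)"

text \<open>bcirc: (mp) x (np) matrix whose (i,j) block (0-based) is frontal slice (i - j) mod p.\<close>
definition bcirc :: "nat \<Rightarrow> nat \<Rightarrow> nat \<Rightarrow> tensor \<Rightarrow> mat" where
  "bcirc m n p A = (\<lambda>r c. if r < m * p \<and> c < n * p
      then A (r mod m) (c mod n) ((r div m + p - c div n) mod p) else 0)"

definition unfold :: "nat \<Rightarrow> nat \<Rightarrow> nat \<Rightarrow> tensor \<Rightarrow> mat" where
  "unfold n l p B = (\<lambda>r c. if r < n * p \<and> c < l then B (r mod n) c (r div n) else 0)"

definition fold :: "nat \<Rightarrow> nat \<Rightarrow> nat \<Rightarrow> mat \<Rightarrow> tensor" where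
  "fold m l p M = (\<lambda>i j k. if i < m \<and> j < l \<and> k < p then M (k * m + i) j else 0)"

definition matmul :: "nat \<Rightarrow> mat \<Rightarrow> mat \<Rightarrow> mat" where
  "matmul q M N = (\<lambda>r c. \<Sum>s<q. M r s * N s c)"

definition tprod :: "nat \<Rightarrow> nat \<Rightarrow> nat \<Rightarrow> nat \<Rightarrow> tensor \<Rightarrow> tensor \<Rightarrow> tensor" where
  "tprod m n l p A B = fold m l p (matmul (n * p) (bcirc m n p A) (unfold n l p B))"

text \<open>Tensor transpose of an m x n x p tensor (result n x m x p): slices
  (A1)^T, (Ap)^T, ..., (A2)^T.\<close>
definition ttrans :: "nat \<Rightarrow> nat \<Rightarrow> nat \<Rightarrow> tensor \<Rightarrow> tensor" where
  "ttrans m n p A = (\<lambda>i j k. if i < n \<and> j < m \<and> k < p then A j i ((p - k) mod p) else 0)"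

definition tinner :: "nat \<Rightarrow> nat \<Rightarrow> nat \<Rightarrow> tensor \<Rightarrow> tensor \<Rightarrow> real" where
  "tinner m n p A B = (\<Sum>i<m. \<Sum>j<n. \<Sum>k<p. A i j k * B i j k)"

definition symT :: "nat \<Rightarrow> nat \<Rightarrow> tensor set" where
  "symT n p = {A. tvalid n n p A \<and> ttrans n n p A = A}"

definition psdT :: "nat \<Rightarrow> nat \<Rightarrow> tensor set" where
  "psdT n p = {A \<in> symT n p. \<forall>X. tvalid n 1 p X \<longrightarrow> tinner n 1 p X (tprod n n 1 p A X) \<ge> 0}"

definition dualT :: "nat \<Rightarrow> nat \<Rightarrow> tensor set \<Rightarrow> tensor set" where
  "dualT n p K = {B \<in> symT n p. \<forall>A \<in> K. tinner n n p A B \<ge> 0}"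

end

theory Submission
  imports Defs
begin

definition qf :: "'a set \<Rightarrow> ('a \<Rightarrow> 'a \<Rightarrow> real) \<Rightarrow> ('a \<Rightarrow> real) \<Rightarrow> real" where
  "qf I M x = (\<Sum>a\<in>I. \<Sum>b\<in>I. x a * M a b * x b)"

definition psdm :: "'a set \<Rightarrow> ('a \<Rightarrow> 'a \<Rightarrow> real) \<Rightarrow> bool" where
  "psdm I M \<longleftrightarrow> (\<forall>a\<in>I. \<forall>b\<in>I. M a b = M b a) \<and> (\<forall>x. 0 \<le> qf I M x)"

lemma mult_if_delta: "(c::real) * (if P then t else 0) = (if P then c * t else 0)"
  by simp

lemma if_mult_delta: "(if P then t else 0) * (c::real) = (if P then t * c else 0)"
  by simp

lemma qf_shift:
  assumes "finite I" "i \<in> I" "\<forall>a\<in>I. \<forall>b\<in>I. M a b = M b a"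
  shows "qf I M (\<lambda>a. x a + (if a = i then t else 0))
       = qf I M x + 2*t*(\<Sum>a\<in>I. x a * M a i) + t^2 * M i i"
proof -
  let ?y = "\<lambda>a::'a. if a = i then t else (0::real)"
  have e: "(x a + ?y a) * M a b * (x b + ?y b) =
      x a * M a b * x b + x a * M a b * ?y b + ?y a * M a b * x b + ?y a * M a b * ?y b" for a b
    by (simp add: algebra_simps)
  have s1: "(\<Sum>a\<in>I. \<Sum>b\<in>I. x a * M a b * ?y b) = t * (\<Sum>a\<in>I. x a * M a i)"
    using assms by (simp add: mult_if_delta sum_distrib_left mult_ac)
  have s2: "(\<Sum>a\<in>I. \<Sum>b\<in>I. ?y a * M a b * x b) = t * (\<Sum>a\<in>I. x a * M a i)"
  proof -
    have "(\<Sum>a\<in>I. \<Sum>b\<in>I. ?y a * M a b * x b) = (\<Sum>b\<in>I. t * M i b * x b)"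
    proof -
      have "(\<Sum>b\<in>I. ?y a * M a b * x b) = (if a = i then (\<Sum>b\<in>I. t * M i b * x b) else 0)" for a
        by simp
      then show ?thesis using assms(1,2) by simp
    qed
    also have "\<dots> = t * (\<Sum>a\<in>I. x a * M a i)"
      using assms(2,3) by (simp add: sum_distrib_left mult_ac)
    finally show ?thesis .
  qed
  have s3: "(\<Sum>a\<in>I. \<Sum>b\<in>I. ?y a * M a b * ?y b) = t^2 * M i i"
  proof -
    have "(\<Sum>b\<in>I. ?y a * M a b * ?y b) = (if a = i then t * M i i * t else 0)" for a
      using assms(1,2) by (simp add: mult_if_delta)
    then show ?thesis using assms(1,2) by (simp add: power2_eq_square mult_ac)
  qed
  show ?thesis
    unfolding qf_def e sum.distrib s1 s2 s3 by simp
qed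

lemma sum_insert_zero:
  assumes "finite F" "i \<notin> F" "\<forall>b\<in>insert i F. f i b = 0" "\<forall>a\<in>insert i F. f a i = 0"
  shows "(\<Sum>a\<in>insert i F. \<Sum>b\<in>insert i F. f a b) = (\<Sum>a\<in>F. \<Sum>b\<in>F. (f a b :: real))"
  using assms by (simp add: sum.distrib)

lemma qf_zero: "qf I M (\<lambda>_. 0) = 0"
  by (simp add: qf_def)

lemma trace_psd:
  "finite I \<Longrightarrow> psdm I M \<Longrightarrow> psdm I N \<Longrightarrow> 0 \<le> (\<Sum>a\<in>I. \<Sum>b\<in>I. M a b * N a b)"
proof (induction I arbitrary: M N rule: finite_induct)
  case empty
  then show ?case by simp
next
  case (insert i F)
  define J where "J = insert i F"
  have fJ: "finite J" and iJ: "i \<in> J" using insert(1) by (auto simp: J_def)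
  have symM: "\<forall>a\<in>J. \<forall>b\<in>J. M a b = M b a" and qM: "\<And>x. 0 \<le> qf J M x"
    using insert(4) unfolding psdm_def J_def by blast+
  have symN: "\<forall>a\<in>J. \<forall>b\<in>J. N a b = N b a" and qN: "\<And>x. 0 \<le> qf J N x"
    using insert(5) unfolding psdm_def J_def by blast+
  define m where "m = M i i"
  have symMi: "\<forall>b\<in>J. M i b = M b i" using symM iJ by blast
  have shift: "\<And>x t. qf J M (\<lambda>a. x a + (if a = i then t else 0))
       = qf J M x + 2*t*(\<Sum>a\<in>J. x a * M a i) + t^2 * m"
    using qf_shift[OF fJ iJ symM] by (simp add: m_def)
  have m0: "m \<ge> 0"
    using qM[of "\<lambda>a. 0 + (if a = i then 1 else 0)"] shift[of "\<lambda>_. 0" 1] by (simp add: qf_zero)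
  have hrow: "M b i = 0" if "m = 0" "b \<in> J" for b
  proof (rule ccontr)
    assume nz: "M b i \<noteq> 0"
    define x where "x = (\<lambda>a. if a = b then 1 else (0::real))"
    have sx: "(\<Sum>a\<in>J. x a * M a i) = M b i"
      using fJ that(2) by (simp add: x_def if_mult_delta)
    define t where "t = - (qf J M x + 1) / (2 * M b i)"
    have "0 \<le> qf J M (\<lambda>a. x a + (if a = i then t else 0))" by (rule qM)
    also have "\<dots> = qf J M x + 2*t*M b i" using shift[of x t] sx that(1) by simp
    also have "\<dots> = -1" using nz by (simp add: t_def field_simps)
    finally show False by simp
  qed
  define M' where "M' = (\<lambda>a b. M a b - M a i * M i b / m)"
  have symM': "\<forall>a\<in>J. \<forall>b\<in>J. M' a b = M' b a"
  proof (intro ballI)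
    fix a b assume ab: "a \<in> J" "b \<in> J"
    have h: "M a b = M b a" "M a i = M i a" "M i b = M b i" using symM iJ ab by blast+
    show "M' a b = M' b a" unfolding M'_def by (metis h mult.commute)
  qed
  have rowM': "\<forall>b\<in>J. M' i b = 0" "\<forall>a\<in>J. M' a i = 0"
  proof -
    show "\<forall>b\<in>J. M' i b = 0"
    proof
      fix b assume b: "b \<in> J"
      show "M' i b = 0"
      proof (cases "m = 0")
        case True then show ?thesis using hrow[OF True b] symMi b by (simp add: M'_def)
      next
        case False then show ?thesis by (simp add: M'_def m_def)
      qed
    qed
    then show "\<forall>a\<in>J. M' a i = 0" using symM' iJ by metis
  qed
  have qM': "0 \<le> qf J M' x" for x
  proof (cases "m = 0")
    case True
    then have "M' = M" by (simp add: M'_def)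
    then show ?thesis using qM by simp
  next
    case False
    define s where "s = (\<Sum>a\<in>J. x a * M a i)"
    have "qf J M' x = qf J M x - (\<Sum>a\<in>J. \<Sum>b\<in>J. x a * M a i * (M i b * x b) / m)"
      by (simp add: qf_def M'_def algebra_simps sum_subtractf)
    also have "(\<Sum>a\<in>J. \<Sum>b\<in>J. x a * M a i * (M i b * x b) / m) = s * (\<Sum>b\<in>J. M i b * x b) / m"
      by (simp add: s_def sum_divide_distrib sum_distrib_left sum_distrib_right) (rule sum.swap)
    also have "(\<Sum>b\<in>J. M i b * x b) = s"
      unfolding s_def using symMi by (intro sum.cong) auto
    finally have e: "qf J M' x = qf J M x - s * s / m" .
    have "0 \<le> qf J M (\<lambda>a. x a + (if a = i then - s / m else 0))" by (rule qM)
    also have "\<dots> = qf J M x - s * s / m"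
      using shift[of x "- s / m"] False by (simp add: s_def[symmetric] power2_eq_square field_simps)
    finally show ?thesis using e by simp
  qed
  have split: "(\<Sum>a\<in>J. \<Sum>b\<in>J. M a b * N a b) = (\<Sum>a\<in>J. \<Sum>b\<in>J. M' a b * N a b)
       + (\<Sum>a\<in>J. \<Sum>b\<in>J. M a i * N a b * M b i) / m"
  proof -
    have "(\<Sum>a\<in>J. \<Sum>b\<in>J. M a b * N a b) = (\<Sum>a\<in>J. \<Sum>b\<in>J. M' a b * N a b + M a i * N a b * M b i / m)"
      using symMi by (intro sum.cong refl) (auto simp: M'_def field_simps)
    then show ?thesis by (simp add: sum.distrib sum_divide_distrib)
  qed
  have t2: "0 \<le> (\<Sum>a\<in>J. \<Sum>b\<in>J. M a i * N a b * M b i) / m"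
    using qN[of "\<lambda>a. M a i"] m0 by (simp add: qf_def)
  have t1eq: "(\<Sum>a\<in>J. \<Sum>b\<in>J. M' a b * N a b) = (\<Sum>a\<in>F. \<Sum>b\<in>F. M' a b * N a b)"
    unfolding J_def using insert(1,2) rowM' by (intro sum_insert_zero) (auto simp: J_def)
  have pM': "psdm F M'"
    unfolding psdm_def
  proof (intro conjI allI)
    show "\<forall>a\<in>F. \<forall>b\<in>F. M' a b = M' b a" using symM' by (auto simp: J_def)
    fix x
    have "qf F M' x = qf J M' x"
      unfolding qf_def J_def using insert(1,2) rowM' by (intro sum_insert_zero[symmetric]) (auto simp: J_def)
    then show "0 \<le> qf F M' x" using qM' by simp
  qed
  have pN: "psdm F N"
    unfolding psdm_def
  proof (intro conjI allI)
    show "\<forall>a\<in>F. \<forall>b\<in>F. N a b = N b a" using symN by (auto simp: J_def)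
    fix x
    have "qf F N x = qf J N (x(i := 0))"
    proof -
      have "qf J N (x(i := 0)) = (\<Sum>a\<in>F. \<Sum>b\<in>F. (x(i:=0)) a * N a b * (x(i:=0)) b)"
        unfolding qf_def J_def using insert(1,2) by (intro sum_insert_zero) auto
      also have "\<dots> = qf F N x" unfolding qf_def using insert(2)
        by (intro sum.cong refl) auto
      finally show ?thesis by simp
    qed
    then show "0 \<le> qf F N x" using qN by simp
  qed
  have "0 \<le> (\<Sum>a\<in>F. \<Sum>b\<in>F. M' a b * N a b)" by (rule insert(3)[OF pM' pN])
  then show ?case using split t2 t1eq by (simp add: J_def)
qed


lemma ML1: "d < p \<Longrightarrow> l < p \<Longrightarrow> ((d+l) mod p + p - l) mod p = (d::nat)"
proof -
  assume a: "d < p" "l < p"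
  have "(d+l) mod p + p - l = (d+l) mod p + (p - l)" using a by simp
  hence "((d+l) mod p + p - l) mod p = (d + l + (p - l)) mod p" by (simp add: mod_add_left_eq)
  also have "d + l + (p - l) = d + p" using a by simp
  finally show ?thesis using a by simp
qed

lemma ML2: "k < p \<Longrightarrow> l < p \<Longrightarrow> (p - (k+p-l) mod p) mod p = (l+p-k) mod (p::nat)"
proof -
  assume a: "k < p" "l < p"
  show ?thesis
  proof (cases "l \<le> k")
    case True
    then have "(k+p-l) mod p = k - l" using a
      by (metis add.commute add_diff_assoc mod_add_self2 mod_less diff_le_self le_less_trans)
    moreover have "(l+p-k) mod p = (if k = l then 0 else l + p - k)" using a True by auto
    ultimately show ?thesis using a True by auto
  next
    case False
    then have "(k+p-l) mod p = k + p - l" using a by simp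
    moreover have "(l+p-k) mod p = l - k" using a False
      by (metis add.commute add_diff_assoc le_less_trans less_imp_le_nat mod_add_self2 mod_less diff_le_self not_le)
    ultimately show ?thesis using a False by simp
  qed
qed

lemma ML3: "e < p \<Longrightarrow> d < p \<Longrightarrow> ((e+d) mod p + (p-d) mod p) mod p = (e::nat)"
proof -
  assume a: "e < p" "d < p"
  have "((e+d) mod p + (p-d) mod p) mod p = (e + d + (p - d)) mod p" by (simp add: mod_add_eq)
  also have "e + d + (p - d) = e + p" using a by simp
  finally show ?thesis using a by simp
qed

lemma ML4: "k < p \<Longrightarrow> l < p \<Longrightarrow> ((t+l) mod p + (k+p-l) mod p) mod p = (t+k) mod (p::nat)"
proof -
  assume a: "k < p" "l < p"
  have "((t+l) mod p + (k+p-l) mod p) mod p = (t + l + (k + p - l)) mod p" by (simp add: mod_add_eq)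
  also have "t + l + (k + p - l) = (t + k) + p" using a by simp
  finally show ?thesis by simp
qed

lemma bij_shift: "0 < p \<Longrightarrow> bij_betw (\<lambda>d. (d + l) mod p) {..<p} {..<(p::nat)}"
proof -
  assume p: "0 < p"
  have inj: "inj_on (\<lambda>d. (d + l) mod p) {..<p}"
  proof (rule inj_onI)
    fix x y assume xy: "x \<in> {..<p}" "y \<in> {..<p}" "(x + l) mod p = (y + l) mod p"
    have zf:  "((z + l) mod p + (p - l mod p)) mod p = z mod p" for z
    proof -
      have "((z + l) mod p + (p - l mod p)) mod p = (z + l mod p + (p - l mod p)) mod p"
        by (metis mod_add_left_eq mod_add_right_eq)
      also have "z + l mod p + (p - l mod p) = z + p" using p by simp
      finally show ?thesis by simp
    qed
    have "x mod p = y mod p" using zf[of x] zf[of y] xy(3) by metis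
    then show "x = y" using xy by simp
  qed
  have "(\<lambda>d. (d + l) mod p) ` {..<p} \<subseteq> {..<p}" using p by auto
  then have "(\<lambda>d. (d + l) mod p) ` {..<p} = {..<p}" using inj endo_inj_surj by blast
  then show ?thesis using inj by (simp add: bij_betw_def)
qed

lemma sum_shift: "0 < p \<Longrightarrow> (\<Sum>d<p. f ((d + l) mod p)) = (\<Sum>d<(p::nat). (f d :: real))"
  using sum.reindex_bij_betw[OF bij_shift] by blast

lemma sum_shift2: "l < p \<Longrightarrow> (\<Sum>k<p. f ((k + p - l) mod p)) = (\<Sum>d<(p::nat). (f d :: real))"
proof -
  assume l: "l < p"
  have "(\<Sum>k<p. f ((k + p - l) mod p)) = (\<Sum>k<p. f ((k + (p - l)) mod p))" using l by simp
  also have "\<dots> = (\<Sum>d<p. f d)" using l by (intro sum_shift) simp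
  finally show ?thesis .
qed

lemma sum_split: "(\<Sum>s<(n::nat)*p. f s) = (\<Sum>j<n. \<Sum>l<p. (f (l*n+j) :: real))"
proof -
  have b: "bij_betw (\<lambda>(j,l). l*n+j) ({..<n} \<times> {..<p}) {..<n*p}"
  proof (rule bij_betw_byWitness[where f'="\<lambda>s. (s mod n, s div n)"])
    show "\<forall>a\<in>{..<n} \<times> {..<p}. (\<lambda>s. (s mod n, s div n)) ((\<lambda>(j, l). l * n + j) a) = a" by auto
    show "\<forall>a'\<in>{..<n * p}. (\<lambda>(j, l). l * n + j) ((\<lambda>s. (s mod n, s div n)) a') = a'" by auto
    show "(\<lambda>(j, l). l * n + j) ` ({..<n} \<times> {..<p}) \<subseteq> {..<n * p}"
    proof clarsimp
      fix j l assume "j < n" "l < p"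
      then have "l * n + j < (l + 1) * n" by simp
      also have "\<dots> \<le> p * n" using \<open>l < p\<close> by (intro mult_right_mono) auto
      finally show "l * n + j < n * p" by (simp add: mult.commute)
    qed
    show "(\<lambda>s. (s mod n, s div n)) ` {..<n * p} \<subseteq> {..<n} \<times> {..<p}"
      by (auto simp: less_mult_imp_div_less mult.commute) (metis mod_less_divisor mult_is_0 not_gr0 not_less0)
  qed
  have "(\<Sum>s<n*p. f s) = (\<Sum>x\<in>{..<n} \<times> {..<p}. f ((\<lambda>(j,l). l*n+j) x))"
    using sum.reindex_bij_betw[OF b, of f] by simp
  also have "\<dots> = (\<Sum>j<n. \<Sum>l<p. f (l*n+j))"
    by (simp add: sum.cartesian_product case_prod_beta)
  finally show ?thesis .
qed


definition MAT :: "nat \<Rightarrow> tensor \<Rightarrow> nat \<times> nat \<Rightarrow> nat \<times> nat \<Rightarrow> real" where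
  "MAT p A = (\<lambda>a b. A (fst a) (fst b) ((snd a + p - snd b) mod p))"

definition IX :: "nat \<Rightarrow> nat \<Rightarrow> (nat \<times> nat) set" where
  "IX n p = {..<n} \<times> {..<p}"

lemma finite_IX: "finite (IX n p)" by (simp add: IX_def)

lemma sum_IX: "(\<Sum>a\<in>IX n p. f a) = (\<Sum>i<n. \<Sum>k<p. (f (i,k) :: real))"
  by (simp add: IX_def sum.cartesian_product')

lemma qf_IX: "qf (IX n p) M x = (\<Sum>i<n. \<Sum>k<p. \<Sum>j<n. \<Sum>l<p. x (i,k) * M (i,k) (j,l) * x (j,l))"
  by (simp add: qf_def sum_IX)

lemma tprod_val:
  assumes "i < n" "k < p"
  shows "tprod n n (Suc 0) p A X i 0 k = (\<Sum>j<n. \<Sum>l<p. A i j ((k+p-l) mod p) * X j 0 l)"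
proof -
  have ik: "k*n+i < n*p"
  proof -
    have "k * n + i < (k + 1) * n" using assms by simp
    also have "\<dots> \<le> p * n" using assms by (intro mult_right_mono) auto
    finally show ?thesis by (simp add: mult.commute)
  qed
  have jl: "l*n+j < n*p" if "j < n" "l < p" for j l
  proof -
    have "l * n + j < (l + 1) * n" using that by simp
    also have "\<dots> \<le> p * n" using that by (intro mult_right_mono) auto
    finally show ?thesis by (simp add: mult.commute)
  qed
  have "tprod n n (Suc 0) p A X i 0 k = (\<Sum>s<n*p. bcirc n n p A (k*n+i) s * unfold n 1 p X s 0)"
    using assms by (simp add: tprod_def fold_def matmul_def)
  also have "\<dots> = (\<Sum>j<n. \<Sum>l<p. bcirc n n p A (k*n+i) (l*n+j) * unfold n 1 p X (l*n+j) 0)"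
    by (rule sum_split)
  also have "\<dots> = (\<Sum>j<n. \<Sum>l<p. A i j ((k+p-l) mod p) * X j 0 l)"
    using assms ik jl by (intro sum.cong refl) (simp add: bcirc_def unfold_def)
  finally show ?thesis .
qed

lemma tq:
  "tinner n 1 p X (tprod n n 1 p A X) = qf (IX n p) (MAT p A) (\<lambda>a. X (fst a) 0 (snd a))"
proof -
  have "tinner n 1 p X (tprod n n 1 p A X) = (\<Sum>i<n. \<Sum>k<p. X i 0 k * tprod n n 1 p A X i 0 k)"
    by (simp add: tinner_def)
  also have "\<dots> = (\<Sum>i<n. \<Sum>k<p. X i 0 k * (\<Sum>j<n. \<Sum>l<p. A i j ((k+p-l) mod p) * X j 0 l))"
    by (intro sum.cong refl) (simp add: tprod_val)
  also have "\<dots> = qf (IX n p) (MAT p A) (\<lambda>a. X (fst a) 0 (snd a))"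
    by (simp add: qf_IX MAT_def sum_distrib_left mult.assoc)
  finally show ?thesis .
qed

lemma MAT_sym:
  assumes "0 < p" "A \<in> symT n p"
  shows "\<forall>a\<in>IX n p. \<forall>b\<in>IX n p. MAT p A a b = MAT p A b a"
proof (intro ballI)
  fix a b assume ab: "a \<in> IX n p" "b \<in> IX n p"
  obtain i k where a: "a = (i,k)" "i < n" "k < p" using ab(1) by (auto simp: IX_def)
  obtain j l where b: "b = (j,l)" "j < n" "l < p" using ab(2) by (auto simp: IX_def)
  have tt: "ttrans n n p A = A" using assms(2) by (simp add: symT_def)
  have "A j i ((l+p-k) mod p) = ttrans n n p A j i ((l+p-k) mod p)" using tt by simp
  also have "\<dots> = A i j ((p - (l+p-k) mod p) mod p)"
    using a b assms(1) by (simp add: ttrans_def)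
  also have "(p - (l+p-k) mod p) mod p = (k+p-l) mod p" using ML2[of l p k] a b by simp
  finally show "MAT p A a b = MAT p A b a" using a b by (simp add: MAT_def)
qed

lemma psdT_iff:
  assumes "0 < p"
  shows "A \<in> psdT n p \<longleftrightarrow> A \<in> symT n p \<and> psdm (IX n p) (MAT p A)"
proof
  assume A: "A \<in> psdT n p"
  then have s: "A \<in> symT n p" by (simp add: psdT_def)
  have "0 \<le> qf (IX n p) (MAT p A) x" for x
  proof -
    define X where "X = (\<lambda>i (c::nat) k. if i < n \<and> c = 0 \<and> k < p then x (i,k) else 0)"
    have v: "tvalid n 1 p X" by (auto simp: tvalid_def X_def)
    have "qf (IX n p) (MAT p A) x = qf (IX n p) (MAT p A) (\<lambda>a. X (fst a) 0 (snd a))"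
      unfolding qf_IX by (intro sum.cong refl) (simp add: X_def)
    also have "\<dots> = tinner n 1 p X (tprod n n 1 p A X)" by (rule tq[symmetric])
    also have "\<dots> \<ge> 0" using A v by (simp add: psdT_def)
    finally show ?thesis by simp
  qed
  then show "A \<in> symT n p \<and> psdm (IX n p) (MAT p A)"
    using s MAT_sym[OF assms s] by (simp add: psdm_def)
next
  assume "A \<in> symT n p \<and> psdm (IX n p) (MAT p A)"
  then show "A \<in> psdT n p" unfolding psdT_def psdm_def tq by blast
qed

lemma trace_step:
  "l < p \<Longrightarrow> (\<Sum>k<p. (A::tensor) i j ((k+p-l) mod p) * (B::tensor) i j ((k+p-l) mod p)) = (\<Sum>d<p. A i j d * B i j d)"
  using sum_shift2[of l p "\<lambda>d. A i j d * B i j d"] by simp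

lemma trace_eq:
  assumes "0 < p"
  shows "(\<Sum>a\<in>IX n p. \<Sum>b\<in>IX n p. MAT p A a b * MAT p B a b) = real p * tinner n n p A B"
proof -
  have "(\<Sum>a\<in>IX n p. \<Sum>b\<in>IX n p. MAT p A a b * MAT p B a b)
      = (\<Sum>i<n. \<Sum>k<p. \<Sum>j<n. \<Sum>l<p. A i j ((k+p-l) mod p) * B i j ((k+p-l) mod p))"
    by (simp add: sum_IX MAT_def)
  also have "\<dots> = (\<Sum>i<n. \<Sum>j<n. \<Sum>l<p. \<Sum>k<p. A i j ((k+p-l) mod p) * B i j ((k+p-l) mod p))"
    by (rule sum.cong[OF refl], subst sum.swap, rule sum.cong[OF refl], rule sum.swap)
  also have "\<dots> = (\<Sum>i<n. \<Sum>j<n. \<Sum>l<p. \<Sum>d<p. A i j d * B i j d)"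
    by (rule sum.cong[OF refl], rule sum.cong[OF refl], rule sum.cong[OF refl],
        rule trace_step) simp
  also have "\<dots> = real p * tinner n n p A B"
    by (simp add: tinner_def sum_distrib_left)
  finally show ?thesis .
qed

lemma psdm_gram:
  assumes "\<forall>a\<in>I. \<forall>b\<in>I. M a b = (\<Sum>t\<in>T. v t a * v t b)"
  shows "psdm I M"
  unfolding psdm_def
proof (intro conjI allI)
  show "\<forall>a\<in>I. \<forall>b\<in>I. M a b = M b a" using assms by (simp add: mult.commute)
  fix x
  have "qf I M x = (\<Sum>a\<in>I. \<Sum>b\<in>I. \<Sum>t\<in>T. x a * v t a * (x b * v t b))"
    unfolding qf_def using assms by (intro sum.cong refl) (simp add: sum_distrib_left sum_distrib_right mult_ac)
  also have "\<dots> = (\<Sum>a\<in>I. \<Sum>t\<in>T. \<Sum>b\<in>I. x a * v t a * (x b * v t b))"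
    by (rule sum.cong[OF refl], rule sum.swap)
  also have "\<dots> = (\<Sum>t\<in>T. \<Sum>a\<in>I. \<Sum>b\<in>I. x a * v t a * (x b * v t b))"
    by (rule sum.swap)
  also have "\<dots> = (\<Sum>t\<in>T. (\<Sum>a\<in>I. x a * v t a) * (\<Sum>a\<in>I. x a * v t a))"
    by (simp add: sum_distrib_left sum_distrib_right) (rule sum.cong[OF refl], rule sum.swap)
  also have "\<dots> \<ge> 0" by (intro sum_nonneg) simp
  finally show "0 \<le> qf I M x" .
qed

definition AX :: "nat \<Rightarrow> nat \<Rightarrow> tensor \<Rightarrow> tensor" where
  "AX n p X = (\<lambda>i j d. if i < n \<and> j < n \<and> d < p then (\<Sum>m<p. X i 0 ((m+d) mod p) * X j 0 m) else 0)"

lemma AX_sym: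
  assumes "0 < p"
  shows "AX n p X \<in> symT n p"
proof -
  have v: "tvalid n n p (AX n p X)" by (simp add: tvalid_def AX_def)
  have "ttrans n n p (AX n p X) i j d = AX n p X i j d" for i j d
  proof (cases "i < n \<and> j < n \<and> d < p")
    case True
    have "ttrans n n p (AX n p X) i j d = (\<Sum>m<p. X j 0 ((m + (p-d) mod p) mod p) * X i 0 m)"
      using True assms by (simp add: ttrans_def AX_def)
    also have "\<dots> = (\<Sum>e<p. X j 0 (((e+d) mod p + (p-d) mod p) mod p) * X i 0 ((e+d) mod p))"
      using sum_shift[OF assms, of "\<lambda>m. X j 0 ((m + (p-d) mod p) mod p) * X i 0 m" d] by simp
    also have "\<dots> = (\<Sum>e<p. X i 0 ((e+d) mod p) * X j 0 e)"
      using True by (intro sum.cong refl) (simp add: ML3 mult.commute)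
    also have "\<dots> = AX n p X i j d" using True by (simp add: AX_def)
    finally show ?thesis .
  next
    case False
    then show ?thesis by (auto simp: ttrans_def AX_def)
  qed
  then have "ttrans n n p (AX n p X) = AX n p X" by (intro ext)
  then show ?thesis using v by (auto simp: symT_def)
qed

lemma AX_MAT:
  assumes "0 < p"
  shows "\<forall>a\<in>IX n p. \<forall>b\<in>IX n p. MAT p (AX n p X) a b
     = (\<Sum>t\<in>{..<p}. X (fst a) 0 ((t + snd a) mod p) * X (fst b) 0 ((t + snd b) mod p))"
proof (intro ballI)
  fix a b assume ab: "a \<in> IX n p" "b \<in> IX n p"
  obtain i k where a: "a = (i,k)" "i < n" "k < p" using ab(1) by (auto simp: IX_def)
  obtain j l where b: "b = (j,l)" "j < n" "l < p" using ab(2) by (auto simp: IX_def)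
  have "MAT p (AX n p X) a b = (\<Sum>m<p. X i 0 ((m + (k+p-l) mod p) mod p) * X j 0 m)"
    using a b assms by (simp add: MAT_def AX_def)
  also have "\<dots> = (\<Sum>t<p. X i 0 (((t+l) mod p + (k+p-l) mod p) mod p) * X j 0 ((t+l) mod p))"
    using sum_shift[OF assms, of "\<lambda>m. X i 0 ((m + (k+p-l) mod p) mod p) * X j 0 m" l] by simp
  also have "\<dots> = (\<Sum>t<p. X i 0 ((t + k) mod p) * X j 0 ((t + l) mod p))"
    using a b by (intro sum.cong refl) (simp add: ML4)
  finally show "MAT p (AX n p X) a b
     = (\<Sum>t\<in>{..<p}. X (fst a) 0 ((t + snd a) mod p) * X (fst b) 0 ((t + snd b) mod p))"
    using a b by simp
qed

lemma AX_psd: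
  assumes "0 < p"
  shows "AX n p X \<in> psdT n p"
  using psdT_iff[OF assms] AX_sym[OF assms] psdm_gram[OF AX_MAT[OF assms]] by blast

lemma dual_step:
  fixes X B :: tensor
  assumes "0 < p" "l < p"
  shows "(\<Sum>k<p. X i 0 k * B i j ((k+p-l) mod p) * X j 0 l)
        = (\<Sum>d<p. X i 0 ((d+l) mod p) * B i j d * X j 0 (l::nat))"
proof -
  have "(\<Sum>k<p. X i 0 k * B i j ((k+p-l) mod p) * X j 0 l)
        = (\<Sum>d<p. X i 0 ((d+l) mod p) * B i j (((d+l) mod p + p - l) mod p) * X j 0 l)"
    using sum_shift[OF assms(1), of "\<lambda>k. X i 0 k * B i j ((k+p-l) mod p) * X j 0 l" l] by simp
  also have "\<dots> = (\<Sum>d<p. X i 0 ((d+l) mod p) * B i j d * X j 0 l)"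
    using assms(2) by (intro sum.cong refl) (simp add: ML1)
  finally show ?thesis .
qed

lemma dual_eq:
  assumes "0 < p"
  shows "qf (IX n p) (MAT p B) (\<lambda>a. X (fst a) 0 (snd a)) = tinner n n p (AX n p X) B"
proof -
  have "qf (IX n p) (MAT p B) (\<lambda>a. X (fst a) 0 (snd a))
      = (\<Sum>i<n. \<Sum>k<p. \<Sum>j<n. \<Sum>l<p. X i 0 k * B i j ((k+p-l) mod p) * X j 0 l)"
    by (simp add: qf_IX MAT_def)
  also have "\<dots> = (\<Sum>i<n. \<Sum>j<n. \<Sum>l<p. \<Sum>k<p. X i 0 k * B i j ((k+p-l) mod p) * X j 0 l)"
    by (rule sum.cong[OF refl], subst sum.swap, rule sum.cong[OF refl], rule sum.swap)
  also have "\<dots> = (\<Sum>i<n. \<Sum>j<n. \<Sum>l<p. \<Sum>d<p. X i 0 ((d+l) mod p) * B i j d * X j 0 l)"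
    by (rule sum.cong[OF refl], rule sum.cong[OF refl], rule sum.cong[OF refl], rule dual_step[OF assms]) simp
  also have "\<dots> = (\<Sum>i<n. \<Sum>j<n. \<Sum>d<p. \<Sum>l<p. X i 0 ((d+l) mod p) * B i j d * X j 0 l)"
    by (rule sum.cong[OF refl], rule sum.cong[OF refl], rule sum.swap)
  also have "\<dots> = tinner n n p (AX n p X) B"
    by (simp add: tinner_def AX_def sum_distrib_left sum_distrib_right mult_ac add.commute)
  finally show ?thesis .
qed

theorem mainTheorem12:
  fixes n p :: nat
  assumes "n \<ge> 1" and "p \<ge> 1"
  shows "psdT n p = dualT n p (psdT n p)"
proof -
  have p: "0 < p" using assms by simp
  show ?thesis
  proof (intro set_eqI iffI)
    fix A assume A: "A \<in> psdT n p"
    have "0 \<le> tinner n n p C A" if C: "C \<in> psdT n p" for C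
    proof -
      have "0 \<le> (\<Sum>a\<in>IX n p. \<Sum>b\<in>IX n p. MAT p C a b * MAT p A a b)"
        using trace_psd[OF finite_IX] A C psdT_iff[OF p] by blast
      then have "0 \<le> real p * tinner n n p C A" by (simp add: trace_eq[OF p])
      then show ?thesis using p by (simp add: zero_le_mult_iff)
    qed
    then show "A \<in> dualT n p (psdT n p)" using A by (simp add: dualT_def psdT_def)
  next
    fix B assume B: "B \<in> dualT n p (psdT n p)"
    then have s: "B \<in> symT n p" by (simp add: dualT_def)
    have "0 \<le> tinner n 1 p X (tprod n n 1 p B X)" for X
    proof -
      have "tinner n 1 p X (tprod n n 1 p B X) = tinner n n p (AX n p X) B"
        by (simp only: tq dual_eq[OF p])
      also have "\<dots> \<ge> 0" using B AX_psd[OF p] by (simp add: dualT_def)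
      finally show ?thesis .
    qed
    then show "B \<in> psdT n p" using s by (simp add: psdT_def)
  qed
qed

end
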